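(* Let $n\ge 2$, let $\mathcal{L}\subset\mathbb{R}^n$ be a tame lattice with Lagrangian basis $\{\mathbf{e}_1,\dots,\mathbf{e}_n\}$, $\mathbf{v}_1=\sum_i\mathbf{e}_i$, $a:=\langle\mathbf{e}_1,\mathbf{e}_1\rangle$, $h:=-\langle\mathbf{e}_1,\mathbf{e}_2\rangle$. Let $r,s$ be integers with $0\ne|r|<n$, $m=r+sn$, and suppose $$\frac{na-1}{n^2-1}\le\left(\frac{m}{r}\right)^2\le\frac{(na-1)(n+1)}{n-1}.$$ Then $$\delta(\mathcal{L}_{\mathbf{v}_1}^{(r,s)})=\frac{((na-1)r^2+m^2)^{n/2}}{2^n n^{n/2}(a+h)^{\frac{n-1}{2}}|mr^{n-1}|}.$$
   Context: Tame lattice: a full-rank lattice $\mathcal{L}\subset\mathbb{R}^n$ with a basis $\{\mathbf{e}_1,\dots,\mathbf{e}_n\}$ (Lagrangian basis) and nonzero $\mathbf{v}_1\in\mathcal{L}\cap\mathcal{L}^*$ such that $\sum_i\mathbf{e}_i=\mathbf{v}_1$, $\langle\mathbf{e}_i,\mathbf{v}_1\rangle=1$, $\langle\mathbf{e}_i,\mathbf{e}_i\rangle=a$, $\langle\mathbf{e}_i,\mathbf{e}_j\rangle=-h$ ($i\ne j$); then $a-h(n-1)=1$. $\mathcal{L}^{(r,s)}_{\mathbf{v}_1}$ is the image of $\mathcal{L}$ under $\mathbf{x}\mapsto r\mathbf{x}+s\langle\mathbf{x},\mathbf{v}_1\rangle\mathbf{v}_1$. The center density of a full-rank lattice $\Lambda\subset\mathbb{R}^n$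 is $\delta(\Lambda)=\lambda_1(\Lambda)^n/(2^n\operatorname{vol}(\Lambda))$, where $\lambda_1$ is the minimal nonzero vector norm. *)

theory Defs
  imports "HOL-Analysis.Analysis"
begin

text \<open>Lattices in R^n are modelled in the type real^'n, with n = CARD('n).
  A lattice basis is a family of vectors indexed by 'n.\<close>

definition lattice_gen :: "('n::finite \<Rightarrow> real^'n) \<Rightarrow> (real^'n) set" where
  "lattice_gen b = {(\<Sum>i\<in>UNIV. of_int (c i) *\<^sub>R b i) | c. True}"

definition is_lattice_basis :: "(real^'n::finite) set \<Rightarrow> ('n \<Rightarrow> real^'n) \<Rightarrow> bool" where
  "is_lattice_basis L b \<longleftrightarrow> inj b \<and> independent (range b) \<and> L = lattice_gen b"

definition full_rank_lattice :: "(real^'n::finite) set \<Rightarrow> bool" where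
  "full_rank_lattice L \<longleftrightarrow> (\<exists>b. is_lattice_basis L b)"

definition dual_lattice :: "(real^'n::finite) set \<Rightarrow> (real^'n) set" where
  "dual_lattice L = {y. \<forall>x\<in>L. y \<bullet> x \<in> \<int>}"

text \<open>Covolume: |det| of the matrix whose rows form a lattice basis (independent of the basis).\<close>
definition covol :: "(real^'n::finite) set \<Rightarrow> real" where
  "covol L = (THE v. \<exists>b. is_lattice_basis L b \<and> v = \<bar>det (\<chi> i. b i)\<bar>)"

definition lambda1 :: "(real^'n::finite) set \<Rightarrow> real" where
  "lambda1 L = Inf {norm x | x. x \<in> L \<and> x \<noteq> 0}"

definition center_density :: "(real^'n::finite) set \<Rightarrow> real" where
  "center_density L = lambda1 L ^ CARD('n) / (2 ^ CARD('n) * covol L)"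

definition tame_basis :: "('n::finite \<Rightarrow> real^'n) \<Rightarrow> real \<Rightarrow> real \<Rightarrow> bool" where
  "tame_basis e a h \<longleftrightarrow>
     (let L = lattice_gen e; v1 = (\<Sum>i\<in>UNIV. e i) in
       is_lattice_basis L e \<and> v1 \<noteq> 0 \<and> v1 \<in> L \<inter> dual_lattice L \<and>
       (\<forall>i. e i \<bullet> v1 = 1) \<and> (\<forall>i. e i \<bullet> e i = a) \<and>
       (\<forall>i j. i \<noteq> j \<longrightarrow> e i \<bullet> e j = - h))"

definition rs_map :: "real \<Rightarrow> real \<Rightarrow> real^'n::finite \<Rightarrow> real^'n \<Rightarrow> real^'n" where
  "rs_map r s v x = r *\<^sub>R x + (s * (x \<bullet> v)) *\<^sub>R v"

end

theory Submission
  imports Defs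
begin

lemma row_lambda[simp]: "row i (\<chi> k. f k) = f i"
  by (simp add: row_def vec_eq_iff)

lemma row_add_set:
  fixes A :: "real^'n::finite^'n"
  assumes "finite S" "j \<notin> S"
  shows "det (\<chi> i. if i \<in> S then row i A + row j A else row i A) = det A"
  using assms
proof (induction S rule: finite_induct)
  case empty
  have "(\<chi> i. row i A) = A" by (simp add: row_def vec_eq_iff)
  then show ?case by simp
next
  case (insert x S)
  let ?B = "(\<chi> i. if i \<in> S then row i A + row j A else row i A) :: real^'n^'n"
  have "(\<chi> i. if i \<in> insert x S then row i A + row j A else row i A)
      = (\<chi> k. if k = x then row x ?B + row j ?B else row k ?B)"
    using insert by (auto simp: vec_eq_iff)
  also have "det \<dots> = det ?B"
  proof (rule det_row_span)
    have "x \<noteq> j" using insert by auto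
    then show "row j ?B \<in> vec.span {row k ?B |k. k \<noteq> x}"
      by (intro vec.span_base) auto
  qed
  finally show ?case using insert by simp
qed


lemma sum_axis_one: "(\<Sum>k\<in>UNIV. axis k (1::real)) = (\<chi> j. 1 :: real^'n::finite)"
  by (simp add: vec_eq_iff axis_def sum_component)

lemma det_D:
  fixes \<alpha> \<beta> :: real
  assumes a0: "\<alpha> \<noteq> 0" and fin: "finite S"
  shows "det (\<chi> i. \<alpha> *\<^sub>R axis i 1 + (if i \<in> S then \<beta> *\<^sub>R (\<chi> j. 1) else 0) :: real^'n::finite^'n)
     = \<alpha>^CARD('n) + of_nat (card S) * \<alpha>^(CARD('n)-1) * \<beta>"
  using fin
proof (induction S rule: finite_induct)
  case empty
  have "det (\<chi> i. \<alpha> *\<^sub>R axis i 1 + (if i \<in> {} then \<beta> *\<^sub>R (\<chi> j. 1) else 0) :: real^'n^'n)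
      = (\<Prod>i\<in>(UNIV::'n set). \<alpha>)"
    by (subst det_diagonal) (auto simp: axis_def)
  then show ?case by simp
next
  case (insert j S)
  let ?M = "(\<chi> i. \<alpha> *\<^sub>R axis i 1 + (if i \<in> S then \<beta> *\<^sub>R (\<chi> j. 1) else 0)) :: real^'n^'n"
  let ?one = "(\<chi> j. 1) :: real^'n"
  let ?N = "(\<chi> i. if i = j then \<beta> *\<^sub>R ?one else \<alpha> *\<^sub>R axis i 1) :: real^'n^'n"
  let ?Dg = "(\<chi> i. if i = j then \<beta> *\<^sub>R axis j 1 else \<alpha> *\<^sub>R axis i 1) :: real^'n^'n"
  let ?x = "(\<Sum>k\<in>UNIV-{j}. \<beta> *\<^sub>R axis k (1::real)) :: real^'n"
  have e1: "(\<chi> i. \<alpha> *\<^sub>R axis i 1 + (if i \<in> insert j S then \<beta> *\<^sub>R ?one else 0) :: real^'n^'n)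
     = (\<chi> i. if i = j then \<alpha> *\<^sub>R axis j 1 + \<beta> *\<^sub>R ?one else row i ?M)"
    using insert by (auto simp: vec_eq_iff)
  have e2: "(\<chi> i. if i = j then \<alpha> *\<^sub>R axis j 1 else row i ?M) = ?M"
    using insert by (auto simp: vec_eq_iff)
  have e3: "(\<chi> i. if i = j then \<beta> *\<^sub>R ?one else row i ?M)
      = (\<chi> i. if i \<in> S then row i ?N + row j ?N else row i ?N)"
    using insert by (auto simp: vec_eq_iff)
  have dN: "det ?N = \<alpha>^(CARD('n)-1) * \<beta>"
  proof -
    have s1: "\<beta> *\<^sub>R axis j 1 + ?x = \<beta> *\<^sub>R ?one"
    proof -
      have "\<beta> *\<^sub>R axis j 1 + ?x = (\<Sum>k\<in>UNIV. \<beta> *\<^sub>R axis k (1::real))"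
        by (subst sum.remove[of UNIV j]) auto
      also have "\<dots> = \<beta> *\<^sub>R ?one" by (simp add: scaleR_sum_right[symmetric] sum_axis_one)
      finally show ?thesis .
    qed
    have "?N = (\<chi> k. if k = j then row j ?Dg + ?x else row k ?Dg)"
      using s1 by (auto simp: vec_eq_iff)
    also have "det \<dots> = det ?Dg"
    proof (rule det_row_span)
      have "?x = (\<Sum>k\<in>UNIV-{j}. (\<beta>/\<alpha>) *\<^sub>R row k ?Dg)"
        using a0 by (intro sum.cong) auto
      also have "\<dots> \<in> span {row k ?Dg |k. k \<noteq> j}"
        by (intro span_sum span_scale span_base) auto
      finally show "?x \<in> vec.span {row k ?Dg |k. k \<noteq> j}" by (simp add: span_vec_eq)
    qed
    also have "det ?Dg = (\<Prod>i\<in>UNIV. if i = j then \<beta> else \<alpha>)"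
      by (subst det_diagonal) (auto simp: axis_def intro!: prod.cong)
    also have "\<dots> = \<beta> * (\<Prod>i\<in>UNIV-{j}. \<alpha>)"
      by (subst prod.remove[of UNIV j]) (auto intro!: prod.cong)
    also have "\<dots> = \<alpha>^(CARD('n)-1) * \<beta>" by (simp add: card_Diff_singleton)
    finally show ?thesis .
  qed
  have "det (\<chi> i. \<alpha> *\<^sub>R axis i 1 + (if i \<in> insert j S then \<beta> *\<^sub>R ?one else 0) :: real^'n^'n)
     = det ?M + det ?N"
    unfolding e1 det_row_add e2 e3 using row_add_set[of S j ?N] insert by simp
  also have "\<dots> = \<alpha>^CARD('n) + of_nat (card (insert j S)) * \<alpha>^(CARD('n)-1) * \<beta>"
    using insert dN by (simp add: algebra_simps)
  finally show ?case .
qed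

lemma det_aIbJ:
  fixes \<alpha> \<beta> :: real
  assumes a0: "\<alpha> \<noteq> 0"
  shows "det (\<chi> i j. (if i = j then \<alpha> else 0) + \<beta> :: real^'n::finite^'n)
     = \<alpha>^(CARD('n)-1) * (\<alpha> + of_nat CARD('n) * \<beta>)"
proof -
  have "(\<chi> i j. (if i = j then \<alpha> else 0) + \<beta> :: real^'n::finite^'n)
     = (\<chi> i. \<alpha> *\<^sub>R axis i 1 + (if i \<in> UNIV then \<beta> *\<^sub>R (\<chi> j. 1) else 0))"
    by (auto simp: vec_eq_iff axis_def)
  also have "det \<dots> = \<alpha>^CARD('n) + of_nat CARD('n) * \<alpha>^(CARD('n)-1) * \<beta>"
    using det_D[OF a0, of UNIV \<beta>] by simp
  also have "\<dots> = \<alpha>^(CARD('n)-1) * (\<alpha> + of_nat CARD('n) * \<beta>)"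
  proof -
    have "\<alpha>^CARD('n) = \<alpha>^(CARD('n)-1) * \<alpha>"
      by (metis One_nat_def Suc_pred finite_UNIV_card_ge_0 finite power_Suc2)
    then show ?thesis by (simp add: algebra_simps)
  qed
  finally show ?thesis .
qed

lemma gen_mem: "b i \<in> lattice_gen b"
proof -
  let ?c = "\<lambda>j. if j = i then 1 else (0::int)"
  have "(\<Sum>j\<in>UNIV. of_int (?c j) *\<^sub>R b j) = (\<Sum>j\<in>UNIV. if j = i then b j else 0)"
    by (rule sum.cong) auto
  also have "\<dots> = b i" by (simp add: sum.delta)
  finally have "b i = (\<Sum>j\<in>UNIV. of_int (?c j) *\<^sub>R b j)" by simp
  then show ?thesis unfolding lattice_gen_def by (intro CollectI exI[of _ ?c]) simp
qed

lemma coeff_matrix: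
  fixes x b :: "'n::finite \<Rightarrow> real^'n"
  assumes "\<And>i. x i \<in> lattice_gen b"
  shows "\<exists>C::'n\<Rightarrow>'n\<Rightarrow>int. (\<chi> i. x i) = (\<chi> i j. real_of_int (C i j)) ** (\<chi> i. b i)"
proof -
  have "\<forall>i. \<exists>c. x i = (\<Sum>j\<in>UNIV. of_int (c j) *\<^sub>R b j)"
    using assms unfolding lattice_gen_def by blast
  then obtain C where C: "\<And>i. x i = (\<Sum>j\<in>UNIV. of_int (C i j) *\<^sub>R b j)"
    by metis
  have "(\<chi> i. x i) = (\<chi> i j. real_of_int (C i j)) ** (\<chi> i. b i)"
    by (simp add: vec_eq_iff matrix_matrix_mult_def C sum_component)
  then show ?thesis by blast
qed

lemma det_int_matrix: "det (\<chi> i j. real_of_int (C i j) :: real^'n::finite^'n) \<in> \<int>"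
  unfolding det_def
  by (intro Ints_sum Ints_mult Ints_prod) auto

lemma lattice_det_unique:
  fixes b b' :: "'n::finite \<Rightarrow> real^'n"
  assumes eq: "lattice_gen b = lattice_gen b'" and nz: "det (\<chi> i. b' i) \<noteq> 0"
  shows "\<bar>det (\<chi> i. b i)\<bar> = \<bar>det (\<chi> i. b' i)\<bar>"
proof -
  obtain C :: "'n\<Rightarrow>'n\<Rightarrow>int" where C: "(\<chi> i. b i) = (\<chi> i j. real_of_int (C i j)) ** (\<chi> i. b' i)"
    using coeff_matrix[of b b'] gen_mem[of b] eq by auto
  obtain D :: "'n\<Rightarrow>'n\<Rightarrow>int" where D: "(\<chi> i. b' i) = (\<chi> i j. real_of_int (D i j)) ** (\<chi> i. b i)"
    using coeff_matrix[of b' b] gen_mem[of b'] eq by auto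
  define dC where "dC = det (\<chi> i j. real_of_int (C i j) :: real^'n^'n)"
  define dD where "dD = det (\<chi> i j. real_of_int (D i j) :: real^'n^'n)"
  have 1: "det (\<chi> i. b i) = dC * det (\<chi> i. b' i)"
    unfolding dC_def by (subst C) (simp add: det_mul)
  have 2: "det (\<chi> i. b' i) = dD * det (\<chi> i. b i)"
    unfolding dD_def by (subst D) (simp add: det_mul)
  have "dD * dC = 1" using 1 2 nz
    by (metis mult.assoc mult_cancel_right1)
  moreover obtain x where x: "dC = of_int x" using det_int_matrix[of C] dC_def Ints_cases by metis
  moreover obtain y where y: "dD = of_int y" using det_int_matrix[of D] dD_def Ints_cases by metis
  ultimately have "y * x = 1" by (metis of_int_eq_1_iff of_int_mult)
  then have "\<bar>x\<bar> = 1" using zmult_eq_1_iff by auto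
  then have "\<bar>dC\<bar> = 1" using x by (metis of_int_1 of_int_abs)
  then show ?thesis using 1 by (simp add: abs_mult)
qed

lemma consec_nonneg: "0 \<le> (t::int) * (t - 1)"
  by (cases "t \<le> 0") (auto simp: mult_nonneg_nonneg mult_nonpos_nonpos)

lemma int_sq_bound:
  fixes c :: "'n::finite \<Rightarrow> int" and q :: int
  shows "(\<Sum>i\<in>UNIV. (c i)^2) - (2*q+1) * (\<Sum>i\<in>UNIV. c i) + int CARD('n) * q * (q+1) \<ge> 0"
proof -
  have "0 \<le> (\<Sum>i\<in>UNIV. (c i - q) * (c i - q - 1))"
    by (intro sum_nonneg) (metis consec_nonneg diff_diff_eq)
  also have "\<dots> = (\<Sum>i\<in>UNIV. (c i)^2 - (2*q+1) * c i + q*(q+1))"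
    by (intro sum.cong) (auto simp: algebra_simps power2_eq_square)
  also have "\<dots> = (\<Sum>i\<in>UNIV. (c i)^2) - (2*q+1) * (\<Sum>i\<in>UNIV. c i) + int CARD('n) * q * (q+1)"
    by (simp add: sum.distrib sum_subtractf sum_distrib_left)
  finally show ?thesis by simp
qed

lemma sq1: assumes "(x::int) \<noteq> 0" shows "1 \<le> x^2"
proof -
  have "1 \<le> \<bar>x\<bar>" using assms by linarith
  then have "1 \<le> \<bar>x\<bar>^2" by (rule one_le_power)
  then show ?thesis by simp
qed

lemma int_main:
  fixes c :: "'n::finite \<Rightarrow> int"
  defines "S \<equiv> (\<Sum>i\<in>UNIV. (c i)^2)" and "k \<equiv> (\<Sum>i\<in>UNIV. c i)" and "n \<equiv> int CARD('n)"
  shows "n * S - k^2 \<ge> 0"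
    and "k \<noteq> 0 \<Longrightarrow> n * S - k^2 \<ge> n - 1 \<or> k^2 \<ge> n^2"
proof -
  define q where "q = k div n"
  define t where "t = k mod n"
  have n0: "n > 0" unfolding n_def by simp
  have kq: "k = q * n + t" unfolding q_def t_def by simp
  have t0: "0 \<le> t" "t < n" unfolding t_def using n0 by auto
  have "S - (2*q+1) * k + n * q * (q+1) \<ge> 0"
    using int_sq_bound[of c q] unfolding S_def k_def n_def by simp
  then have "n * (S - (2*q+1) * k + n * q * (q+1)) \<ge> 0" using n0 by simp
  moreover have "n * (S - (2*q+1) * k + n * q * (q+1)) = n * S - k^2 - t * (n - t)"
    unfolding kq by (simp add: algebra_simps power2_eq_square)
  ultimately have key: "n * S - k^2 \<ge> t * (n - t)" by linarith
  have tnt: "t * (n - t) \<ge> 0" using t0 by simp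
  show "n * S - k^2 \<ge> 0" using key tnt by linarith
  assume k0: "k \<noteq> 0"
  show "n * S - k^2 \<ge> n - 1 \<or> k^2 \<ge> n^2"
  proof (cases "t = 0")
    case True
    then have "q \<noteq> 0" using k0 kq by simp
    then have "q^2 \<ge> 1" by (rule sq1)
    then have "q^2 * n^2 \<ge> 1 * n^2" using n0 by (intro mult_right_mono) auto
    then show ?thesis using True kq by (simp add: power_mult_distrib)
  next
    case False
    then have "(t - 1) * (n - t - 1) \<ge> 0" using t0 by simp
    then have "t * (n - t) \<ge> n - 1" by (simp add: algebra_simps)
    then show ?thesis using key by linarith
  qed
qed

lemma int_k0:
  fixes c :: "'n::finite \<Rightarrow> int"
  assumes "(\<Sum>i\<in>UNIV. c i) = 0" and "c i \<noteq> 0"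
  shows "(\<Sum>i\<in>UNIV. (c i)^2) \<ge> 2"
proof -
  have "(\<Sum>j\<in>UNIV-{i}. c j) = - c i"
    using assms(1) sum.remove[of UNIV i c] by simp
  then have "(\<Sum>j\<in>UNIV-{i}. c j) \<noteq> 0" using assms(2) by simp
  then obtain j where j: "j \<in> UNIV-{i}" "c j \<noteq> 0"
    by (meson sum.neutral)
  have "(\<Sum>x\<in>{i,j}. (c x)^2) \<le> (\<Sum>x\<in>UNIV. (c x)^2)"
    by (intro sum_mono2) auto
  moreover have "(\<Sum>x\<in>{i,j}. (c x)^2) = (c i)^2 + (c j)^2" using j by simp
  ultimately show ?thesis using sq1[OF assms(2)] sq1[OF j(2)] by linarith
qed

lemma real_ineq:
  fixes a h R Sr M Sc k n :: real
  assumes n2: "n \<ge> 2" and a1: "a - (n-1)*h = 1" and Mdef: "M = R + Sr*n" and R0: "R \<noteq> 0"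
   and A0: "n*a - 1 > 0"
   and lo: "(n*a-1)/(n^2-1) \<le> (M/R)^2" and hi: "(M/R)^2 \<le> (n*a-1)*(n+1)/(n-1)"
   and P0: "n*Sc - k^2 \<ge> 0"
   and k0: "k = 0 \<Longrightarrow> Sc \<ge> 2"
   and k1: "k \<noteq> 0 \<Longrightarrow> k^2 \<ge> 1"
   and kn: "k \<noteq> 0 \<Longrightarrow> n*Sc - k^2 \<ge> n - 1 \<or> k^2 \<ge> n^2"
  shows "R^2*((a+h)*Sc - h*k^2) + (2*R*Sr + Sr^2*n)*k^2 \<ge> R^2*a + 2*R*Sr + Sr^2*n"
proof -
  define A where "A = n*a - 1"
  have aeq: "a = 1 + (n-1)*h" using a1 by simp
  have "n*n \<ge> 2*n" using n2 by (intro mult_right_mono) auto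
  then have n1: "n - 1 > 0" "n^2 - 1 > 0" using n2 unfolding power2_eq_square by linarith+
  have R2: "R^2 > 0" using R0 by simp
  have lo': "A*R^2 \<le> M^2*(n^2-1)"
    using lo n1 R2 unfolding A_def by (simp add: power_divide field_simps)
  have hi': "M^2*(n-1) \<le> A*(n+1)*R^2"
    using hi n1 R2 unfolding A_def by (simp add: power_divide field_simps)
  have AR: "A*R^2 \<ge> 0" using A0 R2 unfolding A_def by simp
  have M2: "M^2 \<ge> 0" by simp
  have iden: "n*(n-1)*((R^2*((a+h)*Sc - h*k^2) + (2*R*Sr + Sr^2*n)*k^2) - (R^2*a + 2*R*Sr + Sr^2*n))
      = A*R^2*((n*Sc - k^2) - (n-1)) + M^2*(n-1)*(k^2-1)"
    unfolding A_def Mdef aeq by (simp add: algebra_simps power2_eq_square)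
  have br: "A*R^2*((n*Sc - k^2) - (n-1)) + M^2*(n-1)*(k^2-1) \<ge> 0"
  proof (cases "k = 0")
    case True
    then have "n*Sc - k^2 - (n-1) \<ge> n+1" using k0 n2 by simp
    then have "A*R^2*((n*Sc - k^2) - (n-1)) \<ge> A*R^2*(n+1)" using AR by (intro mult_left_mono) auto
    then show ?thesis using True hi' by (simp add: algebra_simps)
  next
    case False
    note kk = kn[OF False] k1[OF False]
    show ?thesis
    proof (cases "n*Sc - k^2 \<ge> n - 1")
      case True
      have "A*R^2*((n*Sc - k^2) - (n-1)) \<ge> 0" using AR True by simp
      moreover have "M^2*(n-1)*(k^2-1) \<ge> 0" using kk n1 by simp
      ultimately show ?thesis by linarith
    next
      case c2: False
      then have kn2: "k^2 \<ge> n^2" using kk by auto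
      have "A*R^2*((n*Sc - k^2) - (n-1)) \<ge> A*R^2*(-(n-1))" using AR P0 by (intro mult_left_mono) auto
      moreover have "M^2*(n-1)*(k^2-1) \<ge> M^2*(n-1)*(n^2-1)"
        using kn2 n1 M2 by (intro mult_left_mono) auto
      moreover have "M^2*(n-1)*(n^2-1) \<ge> A*R^2*(n-1)"
        using lo' n1 by (simp add: mult.commute mult.left_commute mult_left_mono)
      ultimately show ?thesis by (simp add: algebra_simps)
    qed
  qed
  have "n*(n-1) > 0" using n1 n2 by simp
  then show ?thesis using iden br
    by (smt (verit) mult_pos_neg)
qed

theorem mainTheorem3:
  fixes e :: "'n::finite \<Rightarrow> real^'n" and a h :: real and r s m :: int
  assumes n2: "CARD('n) \<ge> 2"
    and tame: "tame_basis e a h"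
    and r_ne: "r \<noteq> 0" and r_lt: "\<bar>r\<bar> < int CARD('n)"
    and m_def: "m = r + s * int CARD('n)"
    and lo: "(real CARD('n) * a - 1) / (real CARD('n) ^ 2 - 1) \<le> (real_of_int m / real_of_int r) ^ 2"
    and hi: "(real_of_int m / real_of_int r) ^ 2 \<le> (real CARD('n) * a - 1) * (real CARD('n) + 1) / (real CARD('n) - 1)"
  shows "center_density (rs_map (real_of_int r) (real_of_int s) (\<Sum>i\<in>UNIV. e i) ` lattice_gen e)
    = ((real CARD('n) * a - 1) * (real_of_int r)^2 + (real_of_int m)^2) powr (real CARD('n) / 2)
      / (2 ^ CARD('n) * real CARD('n) powr (real CARD('n) / 2) * (a + h) powr ((real CARD('n) - 1) / 2)
         * \<bar>real_of_int m * real_of_int r ^ (CARD('n) - 1)\<bar>)"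
proof -
  define n where "n = CARD('n)"
  define v where "v = (\<Sum>i\<in>UNIV. e i)"
  define R where "R = real_of_int r"
  define Sr where "Sr = real_of_int s"
  define M where "M = real_of_int m"
  define f where "f = rs_map R Sr v"
  have n2': "real n \<ge> 2" using n2 unfolding n_def by simp
  have basis: "is_lattice_basis (lattice_gen e) e" and ev: "\<And>i. e i \<bullet> v = 1"
    and ea: "\<And>i. e i \<bullet> e i = a" and eh: "\<And>i j. i \<noteq> j \<Longrightarrow> e i \<bullet> e j = - h"
    using tame unfolding tame_basis_def v_def Let_def by auto
  have eij: "e i \<bullet> e j = (if i = j then a + h else 0) - h" for i j
    using ea eh by auto
  have vv: "v \<bullet> v = real n"
  proof -
    have "v \<bullet> v = (\<Sum>i\<in>UNIV. e i \<bullet> v)" unfolding v_def[of] by (simp add: inner_sum_left v_def)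
    then show ?thesis using ev by (simp add: n_def)
  qed
  have a1: "a - (real n - 1) * h = 1"
  proof -
    obtain i :: 'n where True by simp
    have "1 = e i \<bullet> v" using ev by simp
    also have "\<dots> = (\<Sum>j\<in>UNIV. e i \<bullet> e j)" unfolding v_def by (simp add: inner_sum_right)
    also have "\<dots> = (\<Sum>j\<in>UNIV. (if j = i then a + h else 0) - h)"
      by (intro sum.cong) (auto simp: eij)
    also have "\<dots> = a + h - real n * h" by (simp add: sum_subtractf sum.delta n_def)
    finally show ?thesis by (simp add: algebra_simps)
  qed
  have ah: "a + h > 0"
  proof -
    have "\<not> CARD('n) \<le> Suc 0" using n2 by simp
    then obtain i j :: 'n where ij: "i \<noteq> j"
      using card_le_Suc0_iff_eq[of "UNIV::'n set"] by auto
    have "e i \<noteq> e j" using basis ij unfolding is_lattice_basis_def inj_def by auto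
    then have "0 < (e i - e j) \<bullet> (e i - e j)" by simp
    also have "\<dots> = 2 * (a + h)" using ij by (simp add: inner_diff_left inner_diff_right eij inner_commute)
    finally show ?thesis by simp
  qed
  have A0: "real n * a - 1 > 0"
  proof -
    have aeq: "a = 1 + (real n - 1) * h" using a1 by simp
    have "real n * a - 1 = (real n - 1) * (a + h)" by (simp only: aeq) (simp add: algebra_simps)
    then show ?thesis using ah n2' by simp
  qed
  have R0: "R \<noteq> 0" using r_ne R_def by simp
  have Mdef: "M = R + Sr * real n" unfolding M_def R_def Sr_def n_def m_def by simp
  have lo': "(real n * a - 1) / (real n ^ 2 - 1) \<le> (M / R) ^ 2" using lo unfolding n_def M_def R_def .
  have hi': "(M / R) ^ 2 \<le> (real n * a - 1) * (real n + 1) / (real n - 1)" using hi unfolding n_def M_def R_def .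
  have M0: "M \<noteq> 0"
  proof
    assume "M = 0"
    then have "(real n * a - 1) / (real n ^ 2 - 1) \<le> 0" using lo' by simp
    moreover have "real n ^ 2 - 1 > 0"
    proof -
      have "real n * real n \<ge> 2 * real n" using n2' by (intro mult_right_mono) auto
      then show ?thesis using n2' unfolding power2_eq_square by linarith
    qed
    ultimately show False using A0 by (simp add: divide_le_0_iff)
  qed
  have lin: "linear f"
    by (rule linearI) (simp_all add: f_def rs_map_def inner_add_left algebra_simps scaleR_add_left)
  have f0: "f 0 = 0" by (simp add: f_def rs_map_def)
  have fsum: "f (\<Sum>i\<in>UNIV. of_int (c i) *\<^sub>R e i) = (\<Sum>i\<in>UNIV. of_int (c i) *\<^sub>R f (e i))" for c :: "'n \<Rightarrow> int"
    by (simp add: real_vector.linear_sum[OF lin] real_vector.linear_scale[OF lin])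
  have img: "f ` lattice_gen e = lattice_gen (\<lambda>i. f (e i))"
  proof
    show "f ` lattice_gen e \<subseteq> lattice_gen (\<lambda>i. f (e i))" unfolding lattice_gen_def using fsum by auto
    show "lattice_gen (\<lambda>i. f (e i)) \<subseteq> f ` lattice_gen e"
    proof
      fix y assume "y \<in> lattice_gen (\<lambda>i. f (e i))"
      then obtain c where y: "y = (\<Sum>i\<in>UNIV. of_int (c i) *\<^sub>R f (e i))" unfolding lattice_gen_def by auto
      then have "y = f (\<Sum>i\<in>UNIV. of_int (c i) *\<^sub>R e i)" using fsum by simp
      moreover have "(\<Sum>i\<in>UNIV. of_int (c i) *\<^sub>R e i) \<in> lattice_gen e" unfolding lattice_gen_def by auto
      ultimately show "y \<in> f ` lattice_gen e" by blast
    qed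
  qed
  define \<gamma> where "\<gamma> = 2*R*Sr + Sr^2 * real n"
  have finner: "f x \<bullet> f y = R^2 * (x \<bullet> y) + \<gamma> * (x \<bullet> v) * (y \<bullet> v)" for x y
    unfolding f_def rs_map_def \<gamma>_def
    by (simp add: inner_add_left inner_add_right vv inner_commute algebra_simps power2_eq_square)
  have fe: "f (e i) \<bullet> f (e j) = R^2 * ((if i = j then a + h else 0) - h) + \<gamma>" for i j
    by (simp add: finner ev eij)
  define E where "E = (\<chi> i. f (e i))"
  define \<alpha> where "\<alpha> = R^2 * (a + h)"
  define \<beta> where "\<beta> = \<gamma> - R^2 * h"
  have gram: "E ** transpose E = (\<chi> i j. (if i = j then \<alpha> else 0) + \<beta>)"
  proof -
    have "(E ** transpose E) $ i $ j = f (e i) \<bullet> f (e j)" for i j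
      by (simp add: matrix_matrix_mult_def transpose_def E_def inner_vec_def)
    then show ?thesis by (simp add: vec_eq_iff fe \<alpha>_def \<beta>_def algebra_simps)
  qed
  have \<alpha>0: "\<alpha> > 0" using R0 ah by (simp add: \<alpha>_def)
  have ab: "\<alpha> + real n * \<beta> = M^2"
  proof -
    have aeq: "a = 1 + (real n - 1) * h" using a1 by simp
    show ?thesis unfolding \<alpha>_def \<beta>_def \<gamma>_def Mdef by (simp only: aeq) (simp add: algebra_simps power2_eq_square)
  qed
  have detE2: "det E ^ 2 = \<alpha>^(n-1) * M^2"
  proof -
    have "det E ^ 2 = det (E ** transpose E)" by (simp add: det_mul power2_eq_square)
    also have "\<dots> = \<alpha>^(n-1) * (\<alpha> + real n * \<beta>)" unfolding gram n_def using \<alpha>0 by (intro det_aIbJ) simp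
    also have "\<dots> = \<alpha>^(n-1) * M^2" using ab by simp
    finally show ?thesis .
  qed
  have detE0: "det E \<noteq> 0" using detE2 \<alpha>0 M0 by (metis mult_eq_0_iff power_not_zero zero_power2 less_irrefl)
  have rowE: "row i E = f (e i)" for i by (simp add: E_def)
  have injE: "inj (\<lambda>i. f (e i))"
  proof (rule injI)
    fix i j assume eq: "f (e i) = f (e j)"
    show "i = j"
    proof (rule ccontr)
      assume "i \<noteq> j"
      then have "det E = 0" using eq rowE by (intro det_identical_rows[of i j]) auto
      then show False using detE0 by simp
    qed
  qed
  have indE: "independent (range (\<lambda>i. f (e i)))"
  proof (rule ccontr)
    assume "\<not> independent (range (\<lambda>i. f (e i)))"
    moreover have "rows E = range (\<lambda>i. f (e i))" by (auto simp: rows_def rowE)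
    ultimately have "vec.dependent (rows E)" by (simp add: dependent_vec_eq)
    then have "det E = 0" by (rule det_dependent_rows)
    then show False using detE0 by simp
  qed
  have basisE: "is_lattice_basis (lattice_gen (\<lambda>i. f (e i))) (\<lambda>i. f (e i))"
    unfolding is_lattice_basis_def using injE indE by simp
  have covolE: "covol (f ` lattice_gen e) = \<bar>det E\<bar>"
    unfolding covol_def img
  proof (rule the_equality)
    show "\<exists>b. is_lattice_basis (lattice_gen (\<lambda>i. f (e i))) b \<and> \<bar>det E\<bar> = \<bar>det (\<chi> i. b i)\<bar>"
      using basisE unfolding E_def by blast
    fix w assume "\<exists>b. is_lattice_basis (lattice_gen (\<lambda>i. f (e i))) b \<and> w = \<bar>det (\<chi> i. b i)\<bar>"
    then obtain b where b: "is_lattice_basis (lattice_gen (\<lambda>i. f (e i))) b" "w = \<bar>det (\<chi> i. b i)\<bar>" by blast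
    then have "lattice_gen b = lattice_gen (\<lambda>i. f (e i))" unfolding is_lattice_basis_def by simp
    then show "w = \<bar>det E\<bar>" using lattice_det_unique[of b "\<lambda>i. f (e i)"] detE0 b(2) unfolding E_def by simp
  qed
  have absE: "\<bar>det E\<bar> = \<bar>R\<bar>^(n-1) * (a+h) powr ((real n - 1)/2) * \<bar>M\<bar>"
  proof -
    have n1: "real n - 1 = real (n-1)" using n2 unfolding n_def by simp
    have p: "((a+h) powr ((real n - 1)/2))^2 = (a+h)^(n-1)"
      using ah by (simp add: powr_power n1 powr_realpow)
    have q: "(\<bar>R\<bar>^(n-1))^2 = (R^2)^(n-1)"
    proof -
      have "(\<bar>R\<bar>^(n-1))^2 = (\<bar>R\<bar>^2)^(n-1)"
        by (metis power_mult mult.commute)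
      then show ?thesis by simp
    qed
    have "(\<bar>R\<bar>^(n-1) * (a+h) powr ((real n - 1)/2) * \<bar>M\<bar>)^2 = \<alpha>^(n-1) * M^2"
      unfolding power_mult_distrib p q \<alpha>_def by simp
    also have "\<dots> = \<bar>det E\<bar>^2" using detE2 by simp
    finally show ?thesis by (subst power2_eq_iff_nonneg[symmetric]) auto
  qed
  define T where "T = R^2 * a + \<gamma>"
  have nT: "real n * T = (real n * a - 1) * R^2 + M^2"
    unfolding T_def \<gamma>_def Mdef by (simp add: algebra_simps power2_eq_square)
  have T0: "T > 0"
  proof -
    have "(real n * a - 1) * R^2 + M^2 > 0" using A0 R0 by (simp add: add_pos_nonneg)
    then have "real n * T > 0" using nT by simp
    then show ?thesis using n2' by (simp add: zero_less_mult_iff)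
  qed
  have lam: "lambda1 (f ` lattice_gen e) = sqrt T"
    unfolding lambda1_def
  proof (rule cInf_eq_minimum)
    obtain i0 :: 'n where True by simp
    have nrm: "norm (f (e i0)) = sqrt T"
      by (simp add: norm_eq_sqrt_inner fe T_def)
    then have "f (e i0) \<noteq> 0" using T0 by auto
    moreover have "f (e i0) \<in> f ` lattice_gen e" using gen_mem by blast
    ultimately show "sqrt T \<in> {norm x |x. x \<in> f ` lattice_gen e \<and> x \<noteq> 0}"
      using nrm by force
  next
    fix z assume "z \<in> {norm x |x. x \<in> f ` lattice_gen e \<and> x \<noteq> 0}"
    then obtain y where z: "z = norm y" and y: "y \<in> f ` lattice_gen e" "y \<noteq> 0" by blast
    then obtain c :: "'n \<Rightarrow> int" where yc: "y = f (\<Sum>i\<in>UNIV. of_int (c i) *\<^sub>R e i)"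
      unfolding lattice_gen_def by auto
    define x where "x = (\<Sum>i\<in>UNIV. of_int (c i) *\<^sub>R e i)"
    obtain i1 where c1: "c i1 \<noteq> 0"
    proof (cases "\<forall>i. c i = 0")
      case True
      then have "y = 0" using yc f0 by simp
      then show ?thesis using y by simp
    qed auto
    define Si where "Si = (\<Sum>i\<in>UNIV. (c i)^2)"
    define ki where "ki = (\<Sum>i\<in>UNIV. c i)"
    have xv: "x \<bullet> v = real_of_int ki"
      unfolding x_def ki_def by (simp add: inner_sum_left ev)
    have xe: "x \<bullet> e j = (a+h) * real_of_int (c j) - h * real_of_int ki" for j
    proof -
      have "x \<bullet> e j = (\<Sum>i\<in>UNIV. real_of_int (c i) * ((if i = j then a + h else 0) - h))"
        unfolding x_def by (simp add: inner_sum_left eij)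
      also have "\<dots> = (\<Sum>i\<in>UNIV. if i = j then real_of_int (c i) * (a + h) else 0) - h * (\<Sum>i\<in>UNIV. real_of_int (c i))"
      proof -
        have "(\<Sum>i\<in>UNIV. real_of_int (c i) * ((if i = j then a + h else 0) - h))
            = (\<Sum>i\<in>UNIV. (if i = j then real_of_int (c i) * (a + h) else 0) - h * real_of_int (c i))"
          by (intro sum.cong) (auto simp: algebra_simps)
        then show ?thesis by (simp add: sum_subtractf sum_distrib_left)
      qed
      also have "\<dots> = (a+h) * real_of_int (c j) - h * real_of_int ki"
        by (simp add: ki_def sum.delta)
      finally show ?thesis .
    qed
    have xx: "x \<bullet> x = (a+h) * real_of_int Si - h * (real_of_int ki)^2"
    proof -
      have "x \<bullet> x = (\<Sum>j\<in>UNIV. real_of_int (c j) * (x \<bullet> e j))"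
        by (subst (2) x_def) (simp add: inner_sum_right)
      also have "\<dots> = (\<Sum>j\<in>UNIV. (a+h) * (real_of_int (c j))^2 - h * real_of_int ki * real_of_int (c j))"
        by (simp add: xe algebra_simps power2_eq_square)
      also have "\<dots> = (a+h) * (\<Sum>j\<in>UNIV. (real_of_int (c j))^2) - h * real_of_int ki * (\<Sum>j\<in>UNIV. real_of_int (c j))"
        by (simp add: sum_subtractf sum_distrib_left)
      also have "\<dots> = (a+h) * real_of_int Si - h * (real_of_int ki)^2"
      proof -
        have kr: "(\<Sum>j\<in>UNIV. real_of_int (c j)) = real_of_int ki" by (simp add: ki_def)
        have sr: "(\<Sum>j\<in>UNIV. (real_of_int (c j))^2) = real_of_int Si" by (simp add: Si_def)
        show ?thesis unfolding kr sr by (simp add: power2_eq_square)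
      qed
      finally show ?thesis .
    qed
    have ny: "norm y ^ 2 = R^2*((a+h)*real_of_int Si - h*(real_of_int ki)^2) + (2*R*Sr + Sr^2*real n)*(real_of_int ki)^2"
      unfolding yc x_def[symmetric] power2_norm_eq_inner finner xx xv \<gamma>_def by (simp add: power2_eq_square)
    have im1: "real n * real_of_int Si - (real_of_int ki)^2 \<ge> 0"
    proof -
      have "0 \<le> int n * Si - ki^2" using int_main(1)[of c] unfolding Si_def ki_def n_def by simp
      then have "0 \<le> real_of_int (int n * Si - ki^2)" by (simp only: of_int_0_le_iff)
      then show ?thesis by simp
    qed
    have im2: "real n * real_of_int Si - (real_of_int ki)^2 \<ge> real n - 1 \<or> (real_of_int ki)^2 \<ge> (real n)^2"
      if "real_of_int ki \<noteq> 0"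
    proof -
      have "ki \<noteq> 0" using that by simp
      then have "int n * Si - ki^2 \<ge> int n - 1 \<or> ki^2 \<ge> (int n)^2"
        using int_main(2)[of c] unfolding Si_def ki_def n_def by simp
      show ?thesis
      proof -
        from \<open>int n * Si - ki^2 \<ge> int n - 1 \<or> ki^2 \<ge> (int n)^2\<close>
        have "real_of_int (int n * Si - ki^2) \<ge> real_of_int (int n - 1) \<or> real_of_int (ki^2) \<ge> real_of_int ((int n)^2)"
          by (simp only: of_int_le_iff)
        then show ?thesis by simp
      qed
    qed
    have ik0: "real_of_int Si \<ge> 2" if "real_of_int ki = 0"
    proof -
      have "ki = 0" using that by simp
      then have "Si \<ge> 2" using int_k0[of c i1] c1 unfolding Si_def ki_def by simp
      then show ?thesis by simp
    qed
    have ik1: "(real_of_int ki)^2 \<ge> 1" if "real_of_int ki \<noteq> 0"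
    proof -
      have "ki \<noteq> 0" using that by simp
      then have "ki^2 \<ge> 1" by (rule sq1)
      then have "real_of_int 1 \<le> real_of_int (ki^2)" by (simp only: of_int_le_iff)
      then show ?thesis by simp
    qed
    have "norm y ^ 2 \<ge> T"
      unfolding ny T_def \<gamma>_def
      using real_ineq[of "real n" a h M R Sr "real_of_int Si" "real_of_int ki", OF n2' _ Mdef R0 A0 lo' hi' im1 ik0 ik1 im2]
        a1 by simp
    then have "sqrt T \<le> sqrt (norm y ^ 2)" by (rule real_sqrt_le_mono)
    then show "sqrt T \<le> z" using z by simp
  qed
  have fdef: "rs_map (real_of_int r) (real_of_int s) (\<Sum>i\<in>UNIV. e i) = f"
    by (simp add: f_def R_def Sr_def v_def)
  have Tn: "T = ((real n * a - 1) * R^2 + M^2) / real n"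
    using nT n2' by (simp add: field_simps)
  have sT: "sqrt T ^ n = ((real n * a - 1) * R^2 + M^2) powr (real n / 2) / real n powr (real n / 2)"
  proof -
    have "sqrt T ^ n = (T powr (1/2)) ^ n" using T0 by (simp add: powr_half_sqrt)
    also have "\<dots> = T powr (real n / 2)" using T0 by (simp add: powr_power)
    also have "\<dots> = ((real n * a - 1) * R^2 + M^2) powr (real n / 2) / real n powr (real n / 2)"
      unfolding Tn by (rule powr_divide)
    finally show ?thesis .
  qed
  have "center_density (f ` lattice_gen e)
     = ((real n * a - 1) * R^2 + M^2) powr (real n / 2) / real n powr (real n / 2)
       / (2 ^ n * (\<bar>R\<bar>^(n-1) * (a+h) powr ((real n - 1)/2) * \<bar>M\<bar>))"
    unfolding center_density_def lam covolE absE sT[unfolded n_def] n_def by simp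
  also have "\<dots> = ((real n * a - 1) * R^2 + M^2) powr (real n / 2)
      / (2 ^ n * real n powr (real n / 2) * (a + h) powr ((real n - 1) / 2) * \<bar>M * R ^ (n - 1)\<bar>)"
    by (simp add: abs_mult power_abs mult_ac)
  finally show ?thesis unfolding fdef n_def M_def R_def .
qed

end
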